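(* No randomized online algorithm for non-clairvoyant dynamic bin packing that makes zero migrations is better than $\frac{\mu}{2}$-competitive, where $\mu$ is the ratio of the longest to the shortest item duration.
   Context: Dynamic bin packing: bins have capacity $1$; items arrive online at times $a_i\ge0$ with size $s_i\in[0,1]$ and duration $d_i>0$ (only the size is revealed at arrival), present during $[a_i,a_i+d_i)$. Each item is placed on arrival into an open bin with enough remaining capacity or a new bin, and is never moved (zero migrations). Cost = total active time $\int_0^\infty(\text{number of nonempty bins at } t)\,dt$; $\mathrm{OPT}(I)=\int_0^\infty\mathrm{OPT}_t\,dt$ with $\mathrm{OPT}_t$ the minimum number of unit bins to pack the items present at time $t$. Being $\beta$-competitive means expected cost at most $\beta\,\mathrm{OPT}(I)$ on every instance. *)

theory Defs
  imports "HOL-Probability.Probability"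
begin

text \<open>An item is a triple (arrival time, size, duration).  An instance is a finite list
  of items, listed in order of arrival (ties are processed in list order).\<close>
type_synonym item = "real \<times> real \<times> real"

definition arr :: "item \<Rightarrow> real" where "arr x = fst x"
definition sz  :: "item \<Rightarrow> real" where "sz x = fst (snd x)"
definition dur :: "item \<Rightarrow> real" where "dur x = snd (snd x)"

definition valid_instance :: "item list \<Rightarrow> bool" where
  "valid_instance I \<longleftrightarrow>
     (\<forall>x\<in>set I. 0 \<le> arr x \<and> 0 \<le> sz x \<and> sz x \<le> 1 \<and> 0 < dur x) \<and>
     sorted (map arr I)"

definition duration_ratio_le :: "item list \<Rightarrow> real \<Rightarrow> bool" where
  "duration_ratio_le I \<mu> \<longleftrightarrow> (\<forall>x\<in>set I. \<forall>y\<in>set I. dur x \<le> \<mu> * dur y)"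

definition present :: "item list \<Rightarrow> nat \<Rightarrow> real \<Rightarrow> bool" where
  "present I j t \<longleftrightarrow> arr (I ! j) \<le> t \<and> t < arr (I ! j) + dur (I ! j)"

text \<open>Non-clairvoyant observation available when item i arrives: for each earlier item its
  arrival time, size, and its departure time if it has already departed; plus the arrival
  time and size of the current item.  Durations of present items are not revealed.\<close>
type_synonym observation = "(real \<times> real \<times> real option) list \<times> real \<times> real"

definition obs :: "item list \<Rightarrow> nat \<Rightarrow> observation" where
  "obs I i =
     (map (\<lambda>x. (arr x, sz x, if arr x + dur x \<le> arr (I ! i) then Some (arr x + dur x) else None))
          (take i I),
      arr (I ! i), sz (I ! i))"

text \<open>A deterministic online algorithm maps each observation to a bin label (a natural
  number); choosing a label whose bin is currently empty means opening a new bin.  Items are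
  never moved (zero migrations): item i stays in bin A (obs I i) for its whole lifetime.\<close>
definition bin_of :: "(observation \<Rightarrow> nat) \<Rightarrow> item list \<Rightarrow> nat \<Rightarrow> nat" where
  "bin_of A I i = A (obs I i)"

definition feasible_alg :: "(observation \<Rightarrow> nat) \<Rightarrow> bool" where
  "feasible_alg A \<longleftrightarrow> (\<forall>I. valid_instance I \<longrightarrow>
     (\<forall>i<length I.
        (\<Sum>j | j < i \<and> bin_of A I j = bin_of A I i \<and> present I j (arr (I ! i)). sz (I ! j))
          + sz (I ! i) \<le> 1))"

definition cost :: "(observation \<Rightarrow> nat) \<Rightarrow> item list \<Rightarrow> ennreal" where
  "cost A I = (\<integral>\<^sup>+ t. ennreal (real (card (bin_of A I ` {j. j < length I \<and> present I j t}))) \<partial>lborel)"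

definition opt_at :: "item list \<Rightarrow> real \<Rightarrow> nat" where
  "opt_at I t = (LEAST k. \<exists>f :: nat \<Rightarrow> nat.
      (\<forall>j<length I. present I j t \<longrightarrow> f j < k) \<and>
      (\<forall>b<k. (\<Sum>j | j < length I \<and> present I j t \<and> f j = b. sz (I ! j)) \<le> 1))"

definition OPT :: "item list \<Rightarrow> ennreal" where
  "OPT I = (\<integral>\<^sup>+ t. ennreal (real (opt_at I t)) \<partial>lborel)"

text \<open>A randomized zero-migration non-clairvoyant algorithm: a family of deterministic
  algorithms indexed by a random seed drawn from probability space M (oblivious adversary).\<close>
definition randomized_alg :: "'w measure \<Rightarrow> ('w \<Rightarrow> observation \<Rightarrow> nat) \<Rightarrow> bool" where
  "randomized_alg M A \<longleftrightarrow> prob_space M \<and> (\<forall>\<omega>\<in>space M. feasible_alg (A \<omega>)) \<and>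
     (\<forall>I. valid_instance I \<longrightarrow> (\<lambda>\<omega>. cost (A \<omega>) I) \<in> borel_measurable M)"

definition competitive :: "'w measure \<Rightarrow> ('w \<Rightarrow> observation \<Rightarrow> nat) \<Rightarrow> real \<Rightarrow> real \<Rightarrow> bool" where
  "competitive M A \<mu> \<beta> \<longleftrightarrow> (\<forall>I. valid_instance I \<and> duration_ratio_le I \<mu> \<longrightarrow>
     (\<integral>\<^sup>+ \<omega>. cost (A \<omega>) I \<partial>M) \<le> ennreal \<beta> * OPT I)"

end

theory Submission
  imports Defs
begin


lemma prod_bound:
  fixes a :: "nat \<Rightarrow> real"
  assumes "finite R" "\<And>r. r \<in> R \<Longrightarrow> 0 \<le> a r \<and> a r \<le> 1"
  shows "(\<Prod>r\<in>R. 1 - a r) * (1 + (\<Sum>r\<in>R. a r)) \<le> 1"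
  using assms
proof (induction R rule: finite_induct)
  case empty then show ?case by simp
next
  case (insert x F)
  define P where "P = (\<Prod>r\<in>F. 1 - a r)"
  define S where "S = (\<Sum>r\<in>F. a r)"
  have IH: "P * (1 + S) \<le> 1" using insert unfolding P_def S_def by auto
  have ax: "0 \<le> a x" "a x \<le> 1" using insert by auto
  have P0: "0 \<le> P" unfolding P_def using insert by (intro prod_nonneg) auto
  have S0: "0 \<le> S" unfolding S_def using insert by (intro sum_nonneg) auto
  have "(1 - a x) * P * (1 + (a x + S)) \<le> P * (1 + S)"
  proof -
    have "(1 - a x) * (1 + (a x + S)) \<le> 1 + S"
    proof -
      have "(1 - a x) * (1 + (a x + S)) = 1 + S - a x * a x - a x * S" by (simp add: algebra_simps)
      moreover have "0 \<le> a x * a x" "0 \<le> a x * S" using ax S0 by auto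
      ultimately show ?thesis by linarith
    qed
    from mult_left_mono[OF this P0] show ?thesis by (simp add: algebra_simps)
  qed
  then show ?case using insert IH unfolding P_def S_def by simp
qed

lemma prod_bound2:
  fixes a :: "nat \<Rightarrow> real"
  assumes "finite R" "\<And>r. r \<in> R \<Longrightarrow> 0 \<le> a r \<and> a r \<le> 1" "(\<Sum>r\<in>R. a r) \<le> 1"
  shows "(\<Prod>r\<in>R. 1 - a r) \<le> 1 - (\<Sum>r\<in>R. a r) / 2"
proof -
  define x where "x = (\<Sum>r\<in>R. a r)"
  have x0: "0 \<le> x" unfolding x_def using assms by (intro sum_nonneg) auto
  have "(\<Prod>r\<in>R. 1 - a r) * (1 + x) \<le> 1" using prod_bound assms unfolding x_def by blast
  moreover have "1 \<le> (1 - x/2) * (1 + x)" using x0 assms(3) unfolding x_def[symmetric]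
  proof -
    have "(1 - x/2) * (1 + x) = 1 + x/2 * (1 - x)" by (simp add: field_simps)
    moreover have "0 \<le> x/2 * (1 - x)" using x0 assms(3) unfolding x_def[symmetric] by simp
    ultimately show ?thesis by linarith
  qed
  ultimately have "(\<Prod>r\<in>R. 1 - a r) * (1 + x) \<le> (1 - x/2) * (1 + x)" by linarith
  then show ?thesis using x0 unfolding x_def by (simp add: mult_le_cancel_right)
qed



lemma card_filter_real:
  assumes "finite A"
  shows "(\<Sum>x\<in>A. if P x then 1 else 0 :: real) = real (card {x\<in>A. P x})"
proof -
  have "(\<Sum>x\<in>A. if P x then 1 else 0 :: real) = (\<Sum>x\<in>{x\<in>A. P x}. 1)"
    using sum.inter_filter[OF assms, of "\<lambda>_. 1::real" P] by simp
  then show ?thesis by simp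
qed

lemma row_lt: "r < m \<Longrightarrow> c < (m::nat) \<Longrightarrow> r * m + c < m * m"
proof -
  assume "r < m" "c < m"
  then have "r * m + c < r * m + m" by simp
  also have "\<dots> = (r + 1) * m" by simp
  also have "\<dots> \<le> m * m" using \<open>r < m\<close> by (intro mult_right_mono) auto
  finally show ?thesis .
qed

lemma row_sum_le:
  fixes g :: "nat \<Rightarrow> nat"
  assumes cap: "card {j. j < m*m \<and> g j = b} \<le> m"
  shows "(\<Sum>r<m. card {c. c < m \<and> g (r*m+c) = b}) \<le> m"
proof -
  define B where "B r = {c. c < m \<and> g (r*m+c) = b}" for r
  have e1: "(\<Sum>r<m. card (B r)) = card (SIGMA r:{..<m}. B r)"
    by (subst card_SigmaI) (auto simp: B_def)
  have inj: "inj_on (\<lambda>(r,c). r*m+c) (SIGMA r:{..<m}. B r)"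
  proof (rule inj_on_inverseI[where g = "\<lambda>j. (j div m, j mod m)"])
    fix x assume "x \<in> (SIGMA r:{..<m}. B r)"
    then obtain r c where x: "x = (r, c)" "c < m" unfolding B_def by auto
    then show "(\<lambda>j. (j div m, j mod m)) ((\<lambda>(r,c). r*m+c) x) = x" by simp
  qed
  have sub: "(\<lambda>(r,c). r*m+c) ` (SIGMA r:{..<m}. B r) \<subseteq> {j. j < m*m \<and> g j = b}"
  proof
    fix j assume "j \<in> (\<lambda>(r,c). r*m+c) ` (SIGMA r:{..<m}. B r)"
    then obtain r c where "j = r*m+c" "r < m" "c < m" "g (r*m+c) = b" unfolding B_def by auto
    then show "j \<in> {j. j < m*m \<and> g j = b}" using row_lt by auto
  qed
  have "card (SIGMA r:{..<m}. B r) \<le> card {j. j < m*m \<and> g j = b}"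
    by (rule card_inj_on_le[OF inj sub]) simp
  then show ?thesis using e1 cap unfolding B_def by linarith
qed

lemma hits_sum:
  fixes g :: "nat \<Rightarrow> nat" and m :: nat
  assumes m: "0 < m" and cap: "\<And>b. card {j. j < m*m \<and> g j = b} \<le> m"
  shows "real (m^m) * real m / 2 \<le>
    (\<Sum>f\<in>PiE {..<m} (\<lambda>_. {..<m}). real (card (g ` (\<lambda>r. r*m + f r) ` {..<m})))"
proof -
  define F where "F = PiE {..<m} (\<lambda>_. {..<m::nat})"
  define G where "G = g ` {..<m*m}"
  define X where "X f = g ` (\<lambda>r. r*m + f r) ` {..<m}" for f :: "nat \<Rightarrow> nat"
  define s where "s b r = card {c. c < m \<and> g (r*m+c) = b}" for b r
  have finF: "finite F" unfolding F_def by (simp add: finite_PiE)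
  have finG: "finite G" unfolding G_def by simp
  have cardF: "card F = m^m" unfolding F_def by (simp add: card_PiE)
  have XG: "X f \<subseteq> G" if "f \<in> F" for f
    using that row_lt unfolding X_def G_def F_def by (auto simp: PiE_iff)
  have "(\<Sum>f\<in>F. real (card (X f))) = (\<Sum>f\<in>F. \<Sum>b\<in>G. if b \<in> X f then 1 else 0)"
  proof (rule sum.cong[OF refl])
    fix f assume "f \<in> F"
    have "(\<Sum>b\<in>G. if b \<in> X f then 1 else 0 :: real) = real (card {b\<in>G. b \<in> X f})"
      by (rule card_filter_real[OF finG])
    also have "{b\<in>G. b \<in> X f} = X f" using XG[OF \<open>f \<in> F\<close>] by auto
    finally show "real (card (X f)) = (\<Sum>b\<in>G. if b \<in> X f then 1 else 0)" by simp
  qed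
  also have "\<dots> = (\<Sum>b\<in>G. \<Sum>f\<in>F. if b \<in> X f then 1 else 0)" by (rule sum.swap)
  also have "\<dots> = (\<Sum>b\<in>G. real (card {f\<in>F. b \<in> X f}))"
    using card_filter_real[OF finF] by simp
  finally have eq1: "(\<Sum>f\<in>F. real (card (X f))) = (\<Sum>b\<in>G. real (card {f\<in>F. b \<in> X f}))" .
  have perb: "real (m^m) * (\<Sum>r<m. real (s b r)) / (2 * real m) \<le> real (card {f\<in>F. b \<in> X f})" for b
  proof -
    have sle: "s b r \<le> m" for r unfolding s_def by (rule order.trans[OF card_mono[of "{..<m}"]]) auto
    have xi: "b \<in> X f \<longleftrightarrow> (\<exists>r<m. g (r*m + f r) = b)" for f unfolding X_def by auto
    have compl: "{f\<in>F. b \<notin> X f} = PiE {..<m} (\<lambda>r. {c. c < m \<and> g (r*m+c) \<noteq> b})"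
      unfolding F_def by (rule set_eqI) (simp only: mem_Collect_eq PiE_iff xi, blast)
    have cc: "card {c. c < m \<and> g (r*m+c) \<noteq> b} = m - s b r" for r
    proof -
      have "card {c. c < m \<and> g (r*m+c) \<noteq> b} + card {c. c < m \<and> g (r*m+c) = b} = card ({c. c < m \<and> g (r*m+c) \<noteq> b} \<union> {c. c < m \<and> g (r*m+c) = b})"
        by (rule card_Un_disjoint[symmetric]) auto
      also have "{c. c < m \<and> g (r*m+c) \<noteq> b} \<union> {c. c < m \<and> g (r*m+c) = b} = {..<m}" by auto
      finally show ?thesis unfolding s_def by simp
    qed
    have cardc: "card {f\<in>F. b \<notin> X f} = (\<Prod>r<m. m - s b r)"
      unfolding compl by (simp add: card_PiE cc)
    have split: "card {f\<in>F. b \<in> X f} + card {f\<in>F. b \<notin> X f} = card F"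
    proof -
      have "card {f\<in>F. b \<in> X f} + card {f\<in>F. b \<notin> X f} = card ({f\<in>F. b \<in> X f} \<union> {f\<in>F. b \<notin> X f})"
        by (rule card_Un_disjoint[symmetric]) (use finF in auto)
      also have "{f\<in>F. b \<in> X f} \<union> {f\<in>F. b \<notin> X f} = F" by auto
      finally show ?thesis .
    qed
    define a where "a r = real (s b r) / real m" for r
    have a01: "0 \<le> a r \<and> a r \<le> 1" for r unfolding a_def using sle[of r] m by auto
    have suma: "(\<Sum>r<m. a r) = (\<Sum>r<m. real (s b r)) / real m" unfolding a_def by (simp add: sum_divide_distrib)
    have "(\<Sum>r<m. s b r) \<le> m" using row_sum_le[OF cap[of b]] unfolding s_def .
    then have "real (\<Sum>r<m. s b r) \<le> real m" by (simp only: of_nat_le_iff)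
    then have "(\<Sum>r<m. real (s b r)) \<le> real m" by (simp only: of_nat_sum)
    then have suma1: "(\<Sum>r<m. a r) \<le> 1" unfolding suma using m by simp
    have "real (\<Prod>r<m. m - s b r) = (\<Prod>r<m. real m * (1 - a r))"
      unfolding of_nat_prod
    proof (rule prod.cong[OF refl])
      fix r show "real (m - s b r) = real m * (1 - a r)" unfolding a_def using sle[of r] m
        by (simp add: of_nat_diff algebra_simps)
    qed
    also have "\<dots> = real m ^ m * (\<Prod>r<m. 1 - a r)" by (simp add: prod.distrib)
    also have "\<dots> \<le> real m ^ m * (1 - (\<Sum>r<m. a r) / 2)"
      by (intro mult_left_mono prod_bound2) (use a01 suma1 in auto)
    finally have P: "real (\<Prod>r<m. m - s b r) \<le> real m ^ m * (1 - (\<Sum>r<m. a r) / 2)" .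
    have c1: "card {f\<in>F. b \<in> X f} = m^m - (\<Prod>r<m. m - s b r)" using split cardF cardc by simp
    have c2: "(\<Prod>r<m. m - s b r) \<le> m^m" using split cardF cardc by simp
    have "real (card {f\<in>F. b \<in> X f}) = real (m^m) - real (\<Prod>r<m. m - s b r)"
      unfolding c1 using c2 by (rule of_nat_diff)
    also have "\<dots> \<ge> real m ^ m * ((\<Sum>r<m. a r) / 2)" using P by (simp add: algebra_simps)
    finally have "real m ^ m * ((\<Sum>r<m. a r) / 2) \<le> real (card {f\<in>F. b \<in> X f})" .
    then show ?thesis unfolding suma by (simp add: field_simps)
  qed
  have cover: "real m \<le> (\<Sum>b\<in>G. real (s b r))" if "r < m" for r
  proof -
    have "{..<m} = (\<Union>b\<in>G. {c. c < m \<and> g (r*m+c) = b})"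
      using row_lt[OF that] unfolding G_def by auto
    then have "card {..<m} \<le> (\<Sum>b\<in>G. s b r)" unfolding s_def using card_UN_le[OF finG] by simp
    then have "m \<le> (\<Sum>b\<in>G. s b r)" by simp
    then have "real m \<le> real (\<Sum>b\<in>G. s b r)" by (simp only: of_nat_le_iff)
    then show ?thesis by (simp only: of_nat_sum)
  qed
  have "real (m^m) * real m / 2 = real (m^m) * (real m * real m) / (2 * real m)" using m by simp
  also have "\<dots> \<le> real (m^m) * (\<Sum>b\<in>G. \<Sum>r<m. real (s b r)) / (2 * real m)"
  proof -
    have "real m * real m = (\<Sum>r<m. real m)" by simp
    also have "\<dots> \<le> (\<Sum>r<m. \<Sum>b\<in>G. real (s b r))" by (intro sum_mono cover) auto
    also have "\<dots> = (\<Sum>b\<in>G. \<Sum>r<m. real (s b r))" by (rule sum.swap)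
    finally show ?thesis using m by (intro divide_right_mono mult_left_mono) auto
  qed
  also have "\<dots> = (\<Sum>b\<in>G. real (m^m) * (\<Sum>r<m. real (s b r)) / (2 * real m))"
    by (simp add: sum_distrib_left sum_divide_distrib)
  also have "\<dots> \<le> (\<Sum>b\<in>G. real (card {f\<in>F. b \<in> X f}))" by (intro sum_mono perb)
  also have "\<dots> = (\<Sum>f\<in>F. real (card (X f)))" using eq1 by simp
  finally show ?thesis unfolding F_def X_def .
qed



definition inst :: "nat \<Rightarrow> real \<Rightarrow> (nat \<Rightarrow> nat) \<Rightarrow> item list" where
  "inst m \<mu> f = map (\<lambda>j. (0, 1 / real m, if j mod m = f (j div m) then \<mu> else 1)) [0..<m*m]"

lemma inst_length[simp]: "length (inst m \<mu> f) = m*m"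
  unfolding inst_def by simp

lemma inst_nth: "j < m*m \<Longrightarrow> inst m \<mu> f ! j = (0, 1 / real m, if j mod m = f (j div m) then \<mu> else 1)"
  unfolding inst_def by simp

lemma inst_arr[simp]: "j < m*m \<Longrightarrow> arr (inst m \<mu> f ! j) = 0"
  and inst_sz[simp]: "j < m*m \<Longrightarrow> sz (inst m \<mu> f ! j) = 1 / real m"
  and inst_dur: "j < m*m \<Longrightarrow> dur (inst m \<mu> f ! j) = (if j mod m = f (j div m) then \<mu> else 1)"
  by (simp_all add: inst_nth arr_def sz_def dur_def)

lemma inst_set: "x \<in> set (inst m \<mu> f) \<Longrightarrow> arr x = 0 \<and> sz x = 1 / real m \<and> (dur x = \<mu> \<or> dur x = 1)"
  unfolding inst_def by (auto simp: arr_def sz_def dur_def)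

lemma inst_valid: "0 < m \<Longrightarrow> 1 \<le> \<mu> \<Longrightarrow> valid_instance (inst m \<mu> f)"
proof -
  assume m: "0 < m" and mu: "1 \<le> \<mu>"
  have "map arr (inst m \<mu> f) = map (\<lambda>_. 0) [0..<m*m]" unfolding inst_def by (simp add: arr_def)
  then have s: "map arr (inst m \<mu> f) = replicate (m*m) 0" by (simp add: map_replicate_const)
  have "0 \<le> arr x \<and> 0 \<le> sz x \<and> sz x \<le> 1 \<and> 0 < dur x" if "x \<in> set (inst m \<mu> f)" for x
    using inst_set[OF that] m mu by auto
  then show ?thesis unfolding valid_instance_def s by simp
qed

lemma inst_ratio: "1 \<le> \<mu> \<Longrightarrow> duration_ratio_le (inst m \<mu> f) \<mu>"
  unfolding duration_ratio_le_def
proof (intro ballI)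
  fix x y assume mu: "1 \<le> \<mu>" and x: "x \<in> set (inst m \<mu> f)" and y: "y \<in> set (inst m \<mu> f)"
  have "dur x \<le> \<mu>" using inst_set[OF x] mu by auto
  also have "\<mu> \<le> \<mu> * dur y" using inst_set[OF y] mu by auto
  finally show "dur x \<le> \<mu> * dur y" .
qed

lemma inst_present: "j < m*m \<Longrightarrow> present (inst m \<mu> f) j t \<longleftrightarrow> 0 \<le> t \<and> t < (if j mod m = f (j div m) then \<mu> else 1)"
  unfolding present_def by (simp add: inst_dur)

lemma inst_obs:
  assumes "1 \<le> \<mu>" "i < m*m"
  shows "obs (inst m \<mu> f) i = (replicate i (0, 1 / real m, None), 0, 1 / real m)"
proof -
  have t: "take i (inst m \<mu> f) = map (\<lambda>j. (0, 1 / real m, if j mod m = f (j div m) then \<mu> else 1)) [0..<i]"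
    unfolding inst_def using assms(2) by (simp add: take_map)
  have "map (\<lambda>x. (arr x, sz x, if arr x + dur x \<le> arr (inst m \<mu> f ! i) then Some (arr x + dur x) else None))
          (take i (inst m \<mu> f)) = map (\<lambda>_. (0, 1 / real m, None)) [0..<i]"
    unfolding t using assms by (auto simp: arr_def sz_def dur_def inst_nth)
  also have "\<dots> = replicate i (0, 1 / real m, None)" by (simp add: map_replicate_const)
  finally show ?thesis unfolding obs_def using assms by simp
qed


lemma bin_inst:
  assumes "1 \<le> \<mu>" "j < m*m"
  shows "bin_of A' (inst m \<mu> f) j = A' (replicate j (0, 1 / real m, None), 0, 1 / real m)"
  unfolding bin_of_def using inst_obs[OF assms] by simp

lemma sum_sz_le:
  assumes m: "0 < m" and S: "S \<subseteq> {..<m*m}" and c: "card S \<le> m"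
  shows "(\<Sum>j\<in>S. sz (inst m \<mu> f ! j)) \<le> 1"
proof -
  have "(\<Sum>j\<in>S. sz (inst m \<mu> f ! j)) = (\<Sum>j\<in>S. 1 / real m)"
    by (rule sum.cong[OF refl]) (use S in auto)
  also have "\<dots> = real (card S) / real m" by simp
  also have "\<dots> \<le> 1" using c m by simp
  finally show ?thesis .
qed

lemma cap_bound:
  assumes feas: "feasible_alg A'" and m: "0 < m"
  shows "card {j. j < m*m \<and> A' (replicate j (0, 1 / real m, None), 0, 1 / real m) = b} \<le> m"
proof -
  define g where "g j = A' (replicate j (0, 1 / real m, None), 0, 1 / real m)" for j
  define I where "I = inst m 1 (\<lambda>_. 0)"
  have mu: "(1::real) \<le> 1" by simp
  have val: "valid_instance I" unfolding I_def using inst_valid m mu by blast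
  have step: "card {j. j < i \<and> g j = g i} + 1 \<le> m" if i: "i < m*m" for i
  proof -
    have "(\<Sum>j | j < i \<and> bin_of A' I j = bin_of A' I i \<and> present I j (arr (I ! i)). sz (I ! j)) + sz (I ! i) \<le> 1"
    proof -
      have all: "\<forall>i<length I. (\<Sum>j | j < i \<and> bin_of A' I j = bin_of A' I i \<and> present I j (arr (I ! i)). sz (I ! j)) + sz (I ! i) \<le> 1"
        using feas val unfolding feasible_alg_def by blast
      have "i < length I" using i unfolding I_def by simp
      with all show ?thesis by blast
    qed
    moreover have "{j. j < i \<and> bin_of A' I j = bin_of A' I i \<and> present I j (arr (I ! i))} = {j. j < i \<and> g j = g i}"
      using i mu unfolding I_def g_def by (auto simp: bin_inst inst_present)
    moreover have "(\<Sum>j\<in>{j. j < i \<and> g j = g i}. sz (I ! j)) = real (card {j. j < i \<and> g j = g i}) / real m"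
    proof -
      have "(\<Sum>j\<in>{j. j < i \<and> g j = g i}. sz (I ! j)) = (\<Sum>j\<in>{j. j < i \<and> g j = g i}. 1 / real m)"
        by (rule sum.cong[OF refl]) (use i in \<open>auto simp: I_def\<close>)
      then show ?thesis by simp
    qed
    moreover have "sz (I ! i) = 1 / real m" using i unfolding I_def by simp
    ultimately have "real (card {j. j < i \<and> g j = g i}) / real m + 1 / real m \<le> 1" by simp
    then have "real (card {j. j < i \<and> g j = g i}) + 1 \<le> real m" using m by (simp add: field_simps)
    then show ?thesis by linarith
  qed
  define S where "S = {j. j < m*m \<and> g j = b}"
  have "card S \<le> m"
  proof (cases "S = {}")
    case True then show ?thesis by simp
  next
    case False
    have finS: "finite S" unfolding S_def by simp
    define i where "i = Max S"
    have iS: "i \<in> S" unfolding i_def using finS False by simp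
    have sub: "S \<subseteq> insert i {j. j < i \<and> g j = g i}"
    proof
      fix j assume jS: "j \<in> S"
      then have "j \<le> i" unfolding i_def using finS by simp
      moreover have "g j = g i" using jS iS unfolding S_def by simp
      ultimately show "j \<in> insert i {j. j < i \<and> g j = g i}" by (cases "j = i") simp_all
    qed
    have "card S \<le> card (insert i {j. j < i \<and> g j = g i})" by (rule card_mono) (use sub in auto)
    also have "\<dots> \<le> card {j. j < i \<and> g j = g i} + 1" by (simp add: card_insert_if)
    also have "\<dots> \<le> m" using step[of i] iS unfolding S_def by simp
    finally show ?thesis unfolding S_def .
  qed
  then show ?thesis unfolding S_def g_def .
qed

lemma cost_lower:
  assumes m: "0 < m" and mu: "1 \<le> \<mu>" and f: "f \<in> PiE {..<m} (\<lambda>_. {..<m})"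
  shows "ennreal (\<mu> * real (card ((\<lambda>j. A' (replicate j (0, 1 / real m, None), 0, 1 / real m)) ` (\<lambda>r. r*m + f r) ` {..<m})))
           \<le> cost A' (inst m \<mu> f)"
proof -
  define g where "g j = A' (replicate j (0, 1 / real m, None), 0, 1 / real m)" for j
  define I where "I = inst m \<mu> f"
  define H where "H = card (g ` (\<lambda>r. r*m + f r) ` {..<m})"
  have fr: "f r < m" if "r < m" for r using f that by (auto simp: PiE_iff)
  have pt: "ennreal (real H) * indicator {0..<\<mu>} t
      \<le> ennreal (real (card (bin_of A' I ` {j. j < length I \<and> present I j t})))" for t
  proof (cases "t \<in> {0..<\<mu>}")
    case True
    have sub: "g ` (\<lambda>r. r*m + f r) ` {..<m} \<subseteq> bin_of A' I ` {j. j < length I \<and> present I j t}"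
    proof
      fix y assume "y \<in> g ` (\<lambda>r. r*m + f r) ` {..<m}"
      then obtain r where r: "r < m" and y: "y = g (r*m + f r)" by auto
      have lt: "r*m + f r < m*m" using row_lt[OF r fr[OF r]] .
      have "(r*m + f r) mod m = f r" using fr[OF r] by simp
      moreover have "(r*m + f r) div m = r" using fr[OF r] by simp
      ultimately have "present I (r*m + f r) t" using lt True unfolding I_def by (simp add: inst_present)
      moreover have "bin_of A' I (r*m + f r) = y" unfolding I_def y g_def using bin_inst[OF mu lt] by simp
      ultimately show "y \<in> bin_of A' I ` {j. j < length I \<and> present I j t}" using lt unfolding I_def by force
    qed
    have "H \<le> card (bin_of A' I ` {j. j < length I \<and> present I j t})"
      unfolding H_def by (rule card_mono[OF _ sub]) simp
    then show ?thesis using True by simp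
  next
    case False then show ?thesis by simp
  qed
  have "ennreal (real H) * ennreal \<mu> = (\<integral>\<^sup>+ t. ennreal (real H) * indicator {0..<\<mu>} t \<partial>lborel)"
    using mu by (simp add: nn_integral_cmult_indicator)
  also have "\<dots> \<le> cost A' I" unfolding cost_def by (rule nn_integral_mono) (rule pt)
  finally have "ennreal (real H) * ennreal \<mu> \<le> cost A' I" .
  moreover have "ennreal (real H) * ennreal \<mu> = ennreal (\<mu> * real H)"
    using mu by (simp add: ennreal_mult[symmetric] mult.commute)
  ultimately show ?thesis unfolding H_def g_def I_def by simp
qed


lemma opt_at_le:
  assumes m: "0 < m" and mu: "1 \<le> \<mu>" and f: "f \<in> PiE {..<m} (\<lambda>_. {..<m})"
  shows "opt_at (inst m \<mu> f) t \<le> (if 0 \<le> t \<and> t < 1 then m else if 1 \<le> t \<and> t < \<mu> then 1 else 0)"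
proof -
  define I where "I = inst m \<mu> f"
  define P where "P k \<longleftrightarrow> (\<exists>h :: nat \<Rightarrow> nat.
      (\<forall>j<length I. present I j t \<longrightarrow> h j < k) \<and>
      (\<forall>b<k. (\<Sum>j | j < length I \<and> present I j t \<and> h j = b. sz (I ! j)) \<le> 1))" for k
  have opt: "opt_at I t = (LEAST k. P k)" unfolding opt_at_def P_def ..
  have fr: "f r < m" if "r < m" for r using f that by (auto simp: PiE_iff)
  show ?thesis
  proof (cases "0 \<le> t \<and> t < 1")
    case True
    have "P m" unfolding P_def
    proof (intro exI[of _ "\<lambda>j. j div m"] conjI allI impI)
      fix j assume "j < length I" then show "j div m < m" unfolding I_def
        by (simp add: less_mult_imp_div_less)
    next
      fix b assume b: "b < m"
      define S where "S = {j. j < length I \<and> present I j t \<and> j div m = b}"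
      have "S \<subseteq> (\<lambda>c. b*m + c) ` {..<m}"
      proof
        fix j assume "j \<in> S"
        then have "j div m = b" unfolding S_def by simp
        then have "j = b*m + j mod m" by (metis div_mult_mod_eq add.commute mult.commute)
        moreover have "j mod m < m" using m by simp
        ultimately show "j \<in> (\<lambda>c. b*m + c) ` {..<m}" by blast
      qed
      then have "card S \<le> card ((\<lambda>c. b*m + c) ` {..<m})" by (rule card_mono[rotated]) simp
      also have "\<dots> \<le> m" using card_image_le[of "{..<m}" "\<lambda>c. b*m + c"] by simp
      finally have cS: "card S \<le> m" .
      have "S \<subseteq> {..<m*m}" unfolding S_def I_def by auto
      from sum_sz_le[OF m this cS] show "(\<Sum>j | j < length I \<and> present I j t \<and> j div m = b. sz (I ! j)) \<le> 1"
        unfolding S_def I_def .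
    qed
    then have "opt_at I t \<le> m" unfolding opt by (rule Least_le)
    then show ?thesis using True unfolding I_def by simp
  next
    case nt: False
    show ?thesis
    proof (cases "1 \<le> t \<and> t < \<mu>")
      case True
      have "P 1" unfolding P_def
      proof (intro exI[of _ "\<lambda>j. 0"] conjI allI impI)
        fix b :: nat assume "b < 1"
        define S where "S = {j. j < length I \<and> present I j t \<and> 0 = b}"
        have "S \<subseteq> (\<lambda>r. r*m + f r) ` {..<m}"
        proof
          fix j assume jS: "j \<in> S"
          then have jl: "j < m*m" and pr: "present I j t" unfolding S_def I_def by auto
          have "j mod m = f (j div m)"
          proof (rule ccontr)
            assume "j mod m \<noteq> f (j div m)"
            then have "\<not> present I j t" using True jl unfolding I_def by (simp add: inst_present)
            then show False using pr by simp
          qed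
          then have "j = (j div m)*m + f (j div m)" by (metis div_mult_mod_eq)
          moreover have "j div m < m" using jl by (simp add: less_mult_imp_div_less)
          ultimately show "j \<in> (\<lambda>r. r*m + f r) ` {..<m}" by blast
        qed
        then have "card S \<le> card ((\<lambda>r. r*m + f r) ` {..<m})" by (rule card_mono[rotated]) simp
        also have "\<dots> \<le> m" using card_image_le[of "{..<m}" "\<lambda>r. r*m + f r"] by simp
        finally have cS: "card S \<le> m" .
        have "S \<subseteq> {..<m*m}" unfolding S_def I_def by auto
        from sum_sz_le[OF m this cS] show "(\<Sum>j | j < length I \<and> present I j t \<and> 0 = b. sz (I ! j)) \<le> 1"
          unfolding S_def I_def .
      qed simp
      then have "opt_at I t \<le> 1" unfolding opt by (rule Least_le)
      then show ?thesis using True nt unfolding I_def by simp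
    next
      case False
      have np: "\<not> present I j t" if "j < length I" for j
      proof
        assume "present I j t"
        then have "0 \<le> t \<and> t < (if j mod m = f (j div m) then \<mu> else 1)"
          using that unfolding I_def by (simp add: inst_present)
        then show False using nt False mu by (auto split: if_splits)
      qed
      have "P 0" unfolding P_def by (rule exI[of _ "\<lambda>j. 0"]) (use np in auto)
      then have "opt_at I t \<le> 0" unfolding opt by (rule Least_le)
      then show ?thesis using nt False unfolding I_def by simp
    qed
  qed
qed

lemma opt_upper:
  assumes m: "0 < m" and mu: "1 \<le> \<mu>" and f: "f \<in> PiE {..<m} (\<lambda>_. {..<m})"
  shows "OPT (inst m \<mu> f) \<le> ennreal (real m + (\<mu> - 1))"
proof -
  have pt: "ennreal (real (opt_at (inst m \<mu> f) t))
      \<le> ennreal (real m) * indicator {0..<1} t + ennreal 1 * indicator {1..<\<mu>} t" for t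
  proof -
    have "real (opt_at (inst m \<mu> f) t) \<le> real (if 0 \<le> t \<and> t < 1 then m else if 1 \<le> t \<and> t < \<mu> then 1 else 0)"
      using opt_at_le[OF m mu f, of t] by (simp only: of_nat_le_iff)
    then show ?thesis by (auto simp: indicator_def split: if_splits)
  qed
  have "OPT (inst m \<mu> f) \<le> (\<integral>\<^sup>+ t. ennreal (real m) * indicator {0..<1} t + ennreal 1 * indicator {1..<\<mu>} t \<partial>lborel)"
    unfolding OPT_def by (rule nn_integral_mono) (rule pt)
  also have "\<dots> = (\<integral>\<^sup>+ t. ennreal (real m) * indicator {0..<1::real} t \<partial>lborel) + (\<integral>\<^sup>+ t. ennreal 1 * indicator {1..<\<mu>} t \<partial>lborel)"
  proof -
    have m1: "(\<lambda>t. ennreal (real m) * indicator {0..<1::real} t) \<in> borel_measurable lborel" by measurable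
    have m2: "(\<lambda>t. ennreal 1 * indicator {1..<\<mu>} t) \<in> borel_measurable lborel" by measurable
    show ?thesis by (rule nn_integral_add[OF m1 m2])
  qed
  also have "\<dots> = ennreal (real m) * ennreal 1 + ennreal 1 * ennreal (\<mu> - 1)"
    using mu by (simp add: nn_integral_cmult_indicator)
  also have "\<dots> = ennreal (real m + (\<mu> - 1))" using mu by (simp add: ennreal_plus)
  finally show ?thesis .
qed


theorem lemma24:
  fixes M :: "'w measure" and A :: "'w \<Rightarrow> observation \<Rightarrow> nat" and \<mu> \<beta> :: real
  assumes "randomized_alg M A" and "1 \<le> \<mu>" and "\<beta> < \<mu> / 2"
  shows "\<not> competitive M A \<mu> \<beta>"
proof
  assume comp: "competitive M A \<mu> \<beta>"
  have mu: "1 \<le> \<mu>" using assms(2) .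
  have ps: "prob_space M" and feas: "\<And>\<omega>. \<omega> \<in> space M \<Longrightarrow> feasible_alg (A \<omega>)"
    and meas: "\<And>I. valid_instance I \<Longrightarrow> (\<lambda>\<omega>. cost (A \<omega>) I) \<in> borel_measurable M"
    using assms(1) unfolding randomized_alg_def by auto
  define b' where "b' = max \<beta> 0"
  have b'lt: "b' < \<mu> / 2" using assms(2,3) unfolding b'_def by simp
  have b'0: "0 \<le> b'" unfolding b'_def by simp
  have eb: "ennreal \<beta> = ennreal b'" unfolding b'_def using ennreal_max_0[of \<beta>] by (simp add: max.commute)
  define x where "x = b' * (\<mu> - 1) / (\<mu> / 2 - b')"
  define m where "m = nat \<lceil>x\<rceil> + 1"
  have m0: "0 < m" unfolding m_def by simp
  have "x \<le> real (nat \<lceil>x\<rceil>)" by linarith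
  then have mx: "x < real m" unfolding m_def by simp
  have key: "b' * (real m + \<mu> - 1) < \<mu> * real m / 2"
  proof -
    have pos: "0 < \<mu> / 2 - b'" using b'lt by simp
    have "b' * (\<mu> - 1) < real m * (\<mu> / 2 - b')" using mx pos unfolding x_def by (simp add: divide_less_eq)
    then show ?thesis by (simp add: algebra_simps)
  qed
  define F where "F = PiE {..<m} (\<lambda>_. {..<m::nat})"
  have finF: "finite F" unfolding F_def by (simp add: finite_PiE)
  have cardF: "card F = m^m" unfolding F_def by (simp add: card_PiE)
  define E where "E f = (\<integral>\<^sup>+ \<omega>. cost (A \<omega>) (inst m \<mu> f) \<partial>M)" for f
  have upper: "E f \<le> ennreal b' * ennreal (real m + (\<mu> - 1))" if f: "f \<in> F" for f
  proof -
    have "E f \<le> ennreal \<beta> * OPT (inst m \<mu> f)"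
      using comp inst_valid[OF m0 mu] inst_ratio[OF mu] unfolding competitive_def E_def by blast
    also have "\<dots> \<le> ennreal \<beta> * ennreal (real m + (\<mu> - 1))"
      by (rule mult_left_mono[OF opt_upper[OF m0 mu f[unfolded F_def]]]) simp
    finally show ?thesis unfolding eb .
  qed
  have sumup: "(\<Sum>f\<in>F. E f) \<le> of_nat (card F) * (ennreal b' * ennreal (real m + (\<mu> - 1)))"
    by (rule sum_bounded_above) (rule upper)
  define C where "C = \<mu> * (real (m^m) * real m / 2)"
  have C0: "0 \<le> C" unfolding C_def using mu by simp
  have pw: "ennreal C \<le> (\<Sum>f\<in>F. cost (A \<omega>) (inst m \<mu> f))" if om: "\<omega> \<in> space M" for \<omega>
  proof -
    define g where "g = (\<lambda>j. A \<omega> (replicate j (0, 1 / real m, None), 0, 1 / real m))"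
    have cap: "card {j. j < m*m \<and> g j = b} \<le> m" for b
      unfolding g_def by (rule cap_bound[OF feas[OF om] m0])
    have hs: "real (m^m) * real m / 2 \<le> (\<Sum>f\<in>F. real (card (g ` (\<lambda>r. r*m + f r) ` {..<m})))"
      unfolding F_def by (rule hits_sum[OF m0 cap])
    have "C \<le> \<mu> * (\<Sum>f\<in>F. real (card (g ` (\<lambda>r. r*m + f r) ` {..<m})))"
      unfolding C_def using hs mu by (intro mult_left_mono) auto
    also have "\<dots> = (\<Sum>f\<in>F. \<mu> * real (card (g ` (\<lambda>r. r*m + f r) ` {..<m})))"
      by (simp add: sum_distrib_left)
    finally have "ennreal C \<le> ennreal (\<Sum>f\<in>F. \<mu> * real (card (g ` (\<lambda>r. r*m + f r) ` {..<m})))"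
      by (rule ennreal_leI)
    also have "\<dots> = (\<Sum>f\<in>F. ennreal (\<mu> * real (card (g ` (\<lambda>r. r*m + f r) ` {..<m}))))"
      using mu by (intro sum_ennreal[symmetric]) simp
    also have "\<dots> \<le> (\<Sum>f\<in>F. cost (A \<omega>) (inst m \<mu> f))"
    proof (rule sum_mono)
      fix f assume "f \<in> F"
      then show "ennreal (\<mu> * real (card (g ` (\<lambda>r. r*m + f r) ` {..<m}))) \<le> cost (A \<omega>) (inst m \<mu> f)"
        unfolding g_def F_def by (rule cost_lower[OF m0 mu])
    qed
    finally show ?thesis .
  qed
  have "ennreal C = (\<integral>\<^sup>+ \<omega>. ennreal C \<partial>M)"
    using prob_space.emeasure_space_1[OF ps] by simp
  also have "\<dots> \<le> (\<integral>\<^sup>+ \<omega>. (\<Sum>f\<in>F. cost (A \<omega>) (inst m \<mu> f)) \<partial>M)"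
    by (rule nn_integral_mono) (rule pw)
  also have "\<dots> = (\<Sum>f\<in>F. E f)" unfolding E_def
    by (rule nn_integral_sum) (rule meas[OF inst_valid[OF m0 mu]])
  also have "\<dots> \<le> of_nat (card F) * (ennreal b' * ennreal (real m + (\<mu> - 1)))" by (rule sumup)
  also have "\<dots> = ennreal (real (m^m) * (b' * (real m + (\<mu> - 1))))"
    unfolding cardF ennreal_of_nat_eq_real_of_nat using b'0 mu
    by (simp add: ennreal_mult)
  finally have "ennreal C \<le> ennreal (real (m^m) * (b' * (real m + (\<mu> - 1))))" .
  then have "C \<le> real (m^m) * (b' * (real m + (\<mu> - 1)))"
    using b'0 mu by (subst (asm) ennreal_le_iff) auto
  moreover have "real (m^m) * (b' * (real m + (\<mu> - 1))) < C"
  proof -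
    have "0 < real (m^m)" using m0 by simp
    from mult_strict_left_mono[OF key this] show ?thesis unfolding C_def by (simp add: algebra_simps)
  qed
  ultimately show False by linarith
qed

end
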